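(* Let $p\ge1$ and $\alpha\ge\frac1p$. Then there exists a constant $c=c(\alpha,p)$ such that whenever $k,N\in\mathbb{N}$, $A\subseteq B\subset\mathbb{R}^k$ are two bounded domains of positive measure, $u\in L^{\alpha p}(B,\mathbb{R}^N)$ and $a\in\mathbb{R}^N$, then $$\frac{1}{|B|}\int_B\big|u^{\langle\alpha\rangle}-\big((u)_A\big)^{\langle\alpha\rangle}\big|^p\,dx\le\frac{c\,|B|}{|A|}\cdot\frac{1}{|B|}\int_B\big|u^{\langle\alpha\rangle}-a^{\langle\alpha\rangle}\big|^p\,dx,$$ where $(u)_A:=\frac{1}{|A|}\int_A u\,dx$.
   Context: For $v\in\mathbb{R}^N$ and $\alpha>0$, $v^{\langle\alpha\rangle}:=|v|^{\alpha-1}v$, interpreted as $0$ when $v=0$. $|A|$ denotes Lebesgue measure. *)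

theory Defs
  imports "HOL-Analysis.Analysis"
begin

text \<open>Euclidean space R^k is modelled by extensional functions on the index set {..<k}
 (the carrier of the finite product measure / product topology).\<close>

definition lebk :: "nat \<Rightarrow> (nat \<Rightarrow> real) measure" where
  "lebk k = completion (Pi\<^sub>M {..<k} (\<lambda>_. lborel))"

definition topk :: "nat \<Rightarrow> (nat \<Rightarrow> real) topology" where
  "topk k = product_topology (\<lambda>_. euclideanreal) {..<k}"

definition vnorm :: "nat \<Rightarrow> (nat \<Rightarrow> real) \<Rightarrow> real" where
  "vnorm N v = sqrt (\<Sum>i<N. (v i)\<^sup>2)"

definition bdd_domain :: "nat \<Rightarrow> (nat \<Rightarrow> real) set \<Rightarrow> bool" where
  "bdd_domain k D \<longleftrightarrow> D \<noteq> {} \<and> openin (topk k) D \<and> connectedin (topk k) D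
     \<and> (\<exists>R. \<forall>x\<in>D. vnorm k x \<le> R)"

definition spow :: "nat \<Rightarrow> real \<Rightarrow> (nat \<Rightarrow> real) \<Rightarrow> (nat \<Rightarrow> real)" where
  "spow N \<alpha> v = (if vnorm N v = 0 then (\<lambda>_. 0) else (\<lambda>i. vnorm N v powr (\<alpha> - 1) * v i))"

definition Lq_vec :: "nat \<Rightarrow> nat \<Rightarrow> real \<Rightarrow> (nat \<Rightarrow> real) set \<Rightarrow> ((nat \<Rightarrow> real) \<Rightarrow> (nat \<Rightarrow> real)) \<Rightarrow> bool" where
  "Lq_vec k N q B u \<longleftrightarrow>
     (\<forall>i<N. (\<lambda>x. u x i) \<in> borel_measurable (restrict_space (lebk k) B))
     \<and> set_integrable (lebk k) B (\<lambda>x. vnorm N (u x) powr q)"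

definition vmean :: "nat \<Rightarrow> nat \<Rightarrow> (nat \<Rightarrow> real) set \<Rightarrow> ((nat \<Rightarrow> real) \<Rightarrow> (nat \<Rightarrow> real)) \<Rightarrow> (nat \<Rightarrow> real)" where
  "vmean k N A u = (\<lambda>i. if i < N then (set_lebesgue_integral (lebk k) A (\<lambda>x. u x i)) / measure (lebk k) A else 0)"

end

theory Submission
  imports Defs
begin


lemma tangent_powr:
  fixes s c t :: real
  assumes "s \<ge> 1" "c > 0" "t \<ge> 0"
  shows "c powr s + s * c powr (s-1) * (t - c) \<le> t powr s"
proof (cases "t = 0")
  case True
  have "c powr s = c * c powr (s-1)" using assms by (simp add: powr_mult_base)
  then show ?thesis using True assms by (simp add: algebra_simps)
next
  case False
  have conv: "convex_on {0<..} (\<lambda>x::real. x powr s)"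
  proof (rule convex_on_realI[where f'="\<lambda>x. s * x powr (s-1)"])
    show "connected ({0<..}::real set)" by simp
    fix x assume "x \<in> ({0<..}::real set)"
    then show "((\<lambda>x. x powr s) has_real_derivative s * x powr (s - 1)) (at x)"
      by (auto intro!: derivative_eq_intros)
  next
    fix x y :: real assume "x \<in> {0<..}" "y \<in> {0<..}" "x \<le> y"
    then show "s * x powr (s - 1) \<le> s * y powr (s - 1)"
      using assms by (auto intro!: mult_left_mono powr_mono2)
  qed
  have "t powr s - c powr s \<ge> s * c powr (s-1) * (t - c)"
    apply (rule convex_on_imp_above_tangent[OF conv])
    using assms False by (auto simp: interior_open intro!: derivative_eq_intros)
  then show ?thesis by simp
qed

lemma vnorm_L2: "vnorm N v = L2_set v {..<N}"
  by (simp add: vnorm_def L2_set_def)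

lemma vnorm_nonneg[simp]: "0 \<le> vnorm N v"
  by (simp add: vnorm_def sum_nonneg)

lemma vnorm_cong: "(\<And>i. i < N \<Longrightarrow> x i = y i) \<Longrightarrow> vnorm N x = vnorm N y"
  by (simp add: vnorm_def)

lemma vnorm_add: "vnorm N (\<lambda>i. x i + y i) \<le> vnorm N x + vnorm N y"
  unfolding vnorm_L2 by (rule L2_set_triangle_ineq)

lemma vnorm_scale: "vnorm N (\<lambda>i. c * x i) = \<bar>c\<bar> * vnorm N x"
proof -
  have "vnorm N (\<lambda>i. c * x i) = vnorm N (\<lambda>i. \<bar>c\<bar> * x i)"
    unfolding vnorm_def by (simp add: power_mult_distrib)
  also have "\<dots> = \<bar>c\<bar> * vnorm N x"
    unfolding vnorm_L2 by (simp add: L2_set_right_distrib)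
  finally show ?thesis .
qed

lemma vnorm_commute: "vnorm N (\<lambda>i. x i - y i) = vnorm N (\<lambda>i. y i - x i)"
  unfolding vnorm_def by (simp add: power2_commute)

lemma vnorm_tri: "vnorm N (\<lambda>i. x i - z i) \<le> vnorm N (\<lambda>i. x i - y i) + vnorm N (\<lambda>i. y i - z i)"
  using vnorm_add[of N "\<lambda>i. x i - y i" "\<lambda>i. y i - z i"] by simp

lemma vnorm_diff_ge: "vnorm N x - vnorm N y \<le> vnorm N (\<lambda>i. x i - y i)"
  using vnorm_add[of N "\<lambda>i. x i - y i" y] by simp

lemma vnorm_rev_tri: "\<bar>vnorm N x - vnorm N y\<bar> \<le> vnorm N (\<lambda>i. x i - y i)"
  using vnorm_diff_ge[of N x y] vnorm_diff_ge[of N y x] vnorm_commute[of N x y] by linarith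

lemma vnorm_zero: "vnorm N v = 0 \<Longrightarrow> i < N \<Longrightarrow> v i = 0"
  unfolding vnorm_L2 by (simp add: L2_set_eq_0_iff)

lemma spow_eq: "spow N \<gamma> v = (\<lambda>i. vnorm N v powr (\<gamma>-1) * v i)"
  unfolding spow_def by auto

lemma vnorm_spow: "vnorm N (spow N \<gamma> v) = vnorm N v powr \<gamma>"
proof (cases "vnorm N v = 0")
  case True then show ?thesis by (simp add: spow_def vnorm_def)
next
  case False
  then have "vnorm N v > 0" using vnorm_nonneg[of N v] by linarith
  then show ?thesis unfolding spow_eq vnorm_scale
    by (simp add: powr_mult_base mult.commute)
qed

lemma spow_spow:
  assumes "\<gamma> * \<delta> = 1" "\<gamma> > 0" "i < N"
  shows "spow N \<delta> (spow N \<gamma> v) i = v i"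
proof (cases "vnorm N v = 0")
  case True then show ?thesis using vnorm_zero[OF True assms(3)] by (simp add: spow_def)
next
  case False
  then have t: "vnorm N v > 0" using vnorm_nonneg[of N v] by linarith
  have "(vnorm N v powr \<gamma>) powr (\<delta> - 1) * vnorm N v powr (\<gamma> - 1) = vnorm N v powr (\<gamma> * (\<delta> - 1) + (\<gamma> - 1))"
    using t by (simp add: powr_powr powr_add)
  also have "\<gamma> * (\<delta> - 1) + (\<gamma> - 1) = 0" using assms by (simp add: algebra_simps)
  finally have "(vnorm N v powr \<gamma>) powr (\<delta> - 1) * vnorm N v powr (\<gamma> - 1) = 1" using t by simp
  then show ?thesis unfolding spow_eq[of N \<delta>] vnorm_spow unfolding spow_eq
    by (metis mult.assoc mult_1)
qed



lemma scalar_U: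
  fixes \<gamma> s t :: real
  assumes "\<gamma> > 0" "0 \<le> s" "s \<le> t" "t > 0"
  shows "\<bar>t powr (\<gamma>-1) - s powr (\<gamma>-1)\<bar> * s \<le> (1+\<gamma>) * t powr (\<gamma>-1) * (t - s)"
proof -
  define P where "P = t powr (\<gamma>-1)"
  define Q where "Q = s powr (\<gamma>-1)"
  have P0: "P \<ge> 0" unfolding P_def by simp
  have sQ: "s * Q = s powr \<gamma>" unfolding Q_def using assms by (simp add: powr_mult_base)
  have tP: "t * P = t powr \<gamma>" unfolding P_def using assms by (simp add: powr_mult_base)
  have ts: "t - s \<ge> 0" using assms by simp
  show ?thesis
  proof (cases "\<gamma> \<ge> 1")
    case True
    have QP: "Q \<le> P" unfolding P_def Q_def using True assms by (intro powr_mono2) auto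
    have tan: "t powr \<gamma> + \<gamma> * t powr (\<gamma>-1) * (s - t) \<le> s powr \<gamma>"
      using tangent_powr[of \<gamma> t s] True assms by simp
    have "\<bar>P - Q\<bar> * s = P * s - s * Q" using QP by (simp add: algebra_simps)
    also have "\<dots> \<le> (\<gamma> - 1) * P * (t - s)"
      using tan unfolding sQ[symmetric] tP[symmetric] P_def[symmetric] by (simp add: algebra_simps)
    also have "\<dots> \<le> (1+\<gamma>) * P * (t - s)"
      using P0 ts by (intro mult_right_mono) auto
    finally show ?thesis unfolding P_def Q_def .
  next
    case False
    show ?thesis
    proof (cases "s = 0")
      case True then show ?thesis using P0 ts assms by simp
    next
      case s0: False
      have QP: "P \<le> Q" unfolding P_def Q_def using False assms s0 by (intro powr_mono2') auto
      have "s powr \<gamma> \<le> t powr \<gamma>" using assms by (intro powr_mono2) auto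
      have "\<bar>P - Q\<bar> * s = s * Q - P * s" using QP by (simp add: algebra_simps)
      also have "\<dots> \<le> P * (t - s)" using \<open>s powr \<gamma> \<le> t powr \<gamma>\<close> unfolding sQ tP[symmetric]
        by (simp add: algebra_simps)
      also have "\<dots> \<le> (1+\<gamma>) * P * (t - s)"
      proof -
        have "0 \<le> \<gamma> * P * (t - s)" using P0 ts assms by simp
        then show ?thesis by (simp add: algebra_simps)
      qed
      finally show ?thesis unfolding P_def Q_def .
    qed
  qed
qed

lemma scalar_P:
  fixes \<gamma> s t :: real
  assumes "0 \<le> s" "s \<le> t" "t > 0"
  shows "t powr (\<gamma>-1) \<le> 2 powr \<bar>\<gamma>-1\<bar> * (t + s) powr (\<gamma>-1)"
proof (cases "\<gamma> \<ge> 1")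
  case True
  have "t powr (\<gamma>-1) \<le> (t + s) powr (\<gamma>-1)" using True assms by (intro powr_mono2) auto
  also have "\<dots> \<le> 2 powr \<bar>\<gamma>-1\<bar> * (t + s) powr (\<gamma>-1)"
  proof -
    have "1 \<le> 2 powr \<bar>\<gamma>-1\<bar>" by (rule ge_one_powr_ge_zero) auto
    from mult_right_mono[OF this, of "(t + s) powr (\<gamma>-1)"] show ?thesis by simp
  qed
  finally show ?thesis .
next
  case False
  have "t powr (\<gamma>-1) \<le> ((t+s)/2) powr (\<gamma>-1)" using False assms by (intro powr_mono2') auto
  also have "\<dots> = (t+s) powr (\<gamma>-1) / 2 powr (\<gamma> - 1)" using assms by (simp add: powr_divide)
  also have "\<dots> = 2 powr \<bar>\<gamma>-1\<bar> * (t + s) powr (\<gamma>-1)"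
  proof -
    have "inverse (2 powr (\<gamma>-1)) = (2::real) powr (1-\<gamma>)" by (metis minus_diff_eq powr_minus)
    then show ?thesis using False by (simp add: divide_inverse)
  qed
  finally show ?thesis .
qed

lemma U_aux:
  fixes \<gamma> :: real
  assumes "\<gamma> > 0" "vnorm N W \<le> vnorm N V"
  shows "vnorm N (\<lambda>i. spow N \<gamma> V i - spow N \<gamma> W i)
     \<le> ((2+\<gamma>) * 2 powr \<bar>\<gamma>-1\<bar>) * (vnorm N V + vnorm N W) powr (\<gamma>-1) * vnorm N (\<lambda>i. V i - W i)"
proof (cases "vnorm N V = 0")
  case True
  then have "vnorm N W = 0" using assms vnorm_nonneg[of N W] by linarith
  with True show ?thesis by (simp add: spow_eq vnorm_def)
next
  case False
  define t where "t = vnorm N V"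
  define s where "s = vnorm N W"
  define P where "P = t powr (\<gamma>-1)"
  define Q where "Q = s powr (\<gamma>-1)"
  define d where "d = vnorm N (\<lambda>i. V i - W i)"
  have t0: "t > 0" using False vnorm_nonneg[of N V] unfolding t_def by linarith
  have s0: "0 \<le> s" "s \<le> t" using assms unfolding s_def t_def by auto
  have d0: "t - s \<le> d" unfolding d_def t_def s_def using vnorm_diff_ge .
  have P0: "P \<ge> 0" unfolding P_def by simp
  have "vnorm N (\<lambda>i. spow N \<gamma> V i - spow N \<gamma> W i) = vnorm N (\<lambda>i. P * (V i - W i) + (P - Q) * W i)"
    unfolding spow_eq P_def Q_def t_def s_def by (simp add: algebra_simps)
  also have "\<dots> \<le> vnorm N (\<lambda>i. P * (V i - W i)) + vnorm N (\<lambda>i. (P - Q) * W i)"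
    by (rule vnorm_add)
  also have "\<dots> = P * d + \<bar>P - Q\<bar> * s"
    unfolding vnorm_scale d_def s_def using P0 by simp
  also have "\<bar>P - Q\<bar> * s \<le> (1+\<gamma>) * P * (t - s)"
    unfolding P_def Q_def using scalar_U[OF assms(1) s0 t0] .
  also have "(1+\<gamma>) * P * (t - s) \<le> (1+\<gamma>) * P * d"
    using d0 P0 assms by (intro mult_left_mono) auto
  finally have "vnorm N (\<lambda>i. spow N \<gamma> V i - spow N \<gamma> W i) \<le> (2+\<gamma>) * P * d"
    by (simp add: algebra_simps)
  also have "\<dots> \<le> (2+\<gamma>) * (2 powr \<bar>\<gamma>-1\<bar> * (t + s) powr (\<gamma>-1)) * d"
    unfolding P_def using scalar_P[OF s0 t0, of \<gamma>] assms
    by (intro mult_right_mono mult_left_mono) (auto simp: d_def)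
  finally show ?thesis unfolding t_def s_def d_def by (simp add: algebra_simps)
qed

lemma U_ineq:
  fixes \<gamma> :: real
  assumes "\<gamma> > 0"
  shows "vnorm N (\<lambda>i. spow N \<gamma> V i - spow N \<gamma> W i)
     \<le> ((2+\<gamma>) * 2 powr \<bar>\<gamma>-1\<bar>) * (vnorm N V + vnorm N W) powr (\<gamma>-1) * vnorm N (\<lambda>i. V i - W i)"
proof (cases "vnorm N W \<le> vnorm N V")
  case True then show ?thesis using U_aux[OF assms] by blast
next
  case False
  then have "vnorm N (\<lambda>i. spow N \<gamma> W i - spow N \<gamma> V i)
     \<le> ((2+\<gamma>) * 2 powr \<bar>\<gamma>-1\<bar>) * (vnorm N W + vnorm N V) powr (\<gamma>-1) * vnorm N (\<lambda>i. W i - V i)"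
    using U_aux[OF assms] by simp
  moreover have "vnorm N (\<lambda>i. spow N \<gamma> W i - spow N \<gamma> V i) = vnorm N (\<lambda>i. spow N \<gamma> V i - spow N \<gamma> W i)"
    by (rule vnorm_commute)
  moreover have "vnorm N (\<lambda>i. W i - V i) = vnorm N (\<lambda>i. V i - W i)"
    by (rule vnorm_commute)
  ultimately show ?thesis by (simp add: add.commute)
qed



lemma vnorm_measurable:
  assumes "\<And>i. i < N \<Longrightarrow> (\<lambda>x. F x i) \<in> borel_measurable M"
  shows "(\<lambda>x. vnorm N (F x)) \<in> borel_measurable M"
  unfolding vnorm_def using assms by measurable

lemma pow_le_one_plus:
  fixes t r q :: real
  assumes "0 \<le> t" "0 < r" "r \<le> q"
  shows "t powr r \<le> 1 + t powr q"
proof (cases "t \<le> 1")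
  case True
  then have "t powr r \<le> 1 powr r" using assms by (intro powr_mono2) auto
  then have "t powr r \<le> 1" by simp
  then show ?thesis by (smt (verit) powr_ge_zero)
next
  case False
  then have "t powr r \<le> t powr q" using assms by (intro powr_mono) auto
  then show ?thesis by simp
qed

lemma sum_powr_le:
  fixes x y q :: real
  assumes "0 \<le> x" "0 \<le> y" "0 \<le> q"
  shows "(x + y) powr q \<le> 2 powr q * (x powr q + y powr q)"
proof -
  have "(x + y) powr q \<le> (2 * max x y) powr q" using assms by (intro powr_mono2) auto
  also have "\<dots> = 2 powr q * max x y powr q" using assms by (simp add: powr_mult)
  also have "max x y powr q \<le> x powr q + y powr q"
    by (cases "x \<le> y") (auto simp: max_def)
  then have "2 powr q * max x y powr q \<le> 2 powr q * (x powr q + y powr q)"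
    by (intro mult_left_mono) auto
  finally show ?thesis .
qed

lemma mean_bound:
  fixes f :: "'a \<Rightarrow> nat \<Rightarrow> real"
  assumes "\<And>i. i < N \<Longrightarrow> integrable M (\<lambda>x. f x i)"
    and "integrable M (\<lambda>x. vnorm N (f x))"
  shows "vnorm N (\<lambda>i. integral\<^sup>L M (\<lambda>x. f x i)) \<le> integral\<^sup>L M (\<lambda>x. vnorm N (f x))"
proof -
  define v where "v = (\<lambda>i. integral\<^sup>L M (\<lambda>x. f x i))"
  have "(vnorm N v)\<^sup>2 = (\<Sum>i<N. (v i)\<^sup>2)" unfolding vnorm_def by (simp add: sum_nonneg)
  also have "\<dots> = (\<Sum>i<N. integral\<^sup>L M (\<lambda>x. v i * f x i))"
    unfolding v_def by (simp add: power2_eq_square)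
  also have "\<dots> = integral\<^sup>L M (\<lambda>x. \<Sum>i<N. v i * f x i)"
    using Bochner_Integration.integral_sum[where I="{..<N}" and M=M and f="\<lambda>i x. v i * f x i"] assms by auto
  also have "\<dots> \<le> integral\<^sup>L M (\<lambda>x. vnorm N v * vnorm N (f x))"
  proof (rule integral_mono)
    show "integrable M (\<lambda>x. \<Sum>i<N. v i * f x i)" using assms by auto
    show "integrable M (\<lambda>x. vnorm N v * vnorm N (f x))" using assms by auto
    fix x
    have "(\<Sum>i<N. v i * f x i) \<le> (\<Sum>i<N. \<bar>v i\<bar> * \<bar>f x i\<bar>)"
      by (intro sum_mono) (simp add: abs_mult[symmetric])
    also have "\<dots> \<le> vnorm N v * vnorm N (f x)"
      unfolding vnorm_L2 by (rule L2_set_mult_ineq)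
    finally show "(\<Sum>i<N. v i * f x i) \<le> vnorm N v * vnorm N (f x)" .
  qed
  also have "\<dots> = vnorm N v * integral\<^sup>L M (\<lambda>x. vnorm N (f x))" by simp
  finally have *: "(vnorm N v)\<^sup>2 \<le> vnorm N v * integral\<^sup>L M (\<lambda>x. vnorm N (f x))" .
  show ?thesis
  proof (cases "vnorm N v = 0")
    case True
    then show ?thesis unfolding v_def by (simp add: integral_nonneg_AE)
  next
    case False
    then have "vnorm N v > 0" using vnorm_nonneg[of N v] by linarith
    with * show ?thesis unfolding v_def[symmetric] by (simp add: power2_eq_square)
  qed
qed

lemma jensen_powr:
  fixes h :: "'a \<Rightarrow> real"
  assumes fm: "finite_measure M" and mu: "measure M (space M) > 0"
    and s: "s \<ge> 1" and h0: "\<And>x. x \<in> space M \<Longrightarrow> 0 \<le> h x"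
    and ih: "integrable M h" and ihs: "integrable M (\<lambda>x. h x powr s)"
  shows "(integral\<^sup>L M h / measure M (space M)) powr s \<le> integral\<^sup>L M (\<lambda>x. h x powr s) / measure M (space M)"
proof -
  define \<mu> where "\<mu> = measure M (space M)"
  define c where "c = integral\<^sup>L M h / \<mu>"
  have int0: "0 \<le> integral\<^sup>L M (\<lambda>x. h x powr s)" by (simp add: integral_nonneg_AE)
  have c0: "c \<ge> 0" unfolding c_def using mu h0 by (simp add: integral_nonneg_AE \<mu>_def)
  show ?thesis
  proof (cases "c = 0")
    case True then show ?thesis using int0 mu unfolding c_def \<mu>_def by simp
  next
    case False
    then have cpos: "c > 0" using c0 by simp
    have "integral\<^sup>L M (\<lambda>x. c powr s + s * c powr (s-1) * (h x - c)) \<le> integral\<^sup>L M (\<lambda>x. h x powr s)"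
    proof (rule integral_mono[OF _ ihs])
      show "integrable M (\<lambda>x. c powr s + s * c powr (s-1) * (h x - c))"
        using fm ih by (intro Bochner_Integration.integrable_add Bochner_Integration.integrable_mult_right
              Bochner_Integration.integrable_diff finite_measure.integrable_const) auto
      fix x assume "x \<in> space M"
      then show "c powr s + s * c powr (s-1) * (h x - c) \<le> h x powr s"
        using tangent_powr[OF s cpos h0] by simp
    qed
    moreover have "integral\<^sup>L M (\<lambda>x. c powr s + s * c powr (s-1) * (h x - c))
       = \<mu> * c powr s + s * c powr (s-1) * (integral\<^sup>L M h - \<mu> * c)"
    proof -
      have ic: "integrable M (\<lambda>x. k)" for k :: real using fm by (simp add: finite_measure.integrable_const)
      have i2: "integrable M (\<lambda>x. h x - c)" using ic ih by auto
      have "integral\<^sup>L M (\<lambda>x. c powr s + s * c powr (s-1) * (h x - c))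
          = integral\<^sup>L M (\<lambda>x. c powr s) + integral\<^sup>L M (\<lambda>x. s * c powr (s-1) * (h x - c))"
        using ic i2 by (intro Bochner_Integration.integral_add) auto
      also have "integral\<^sup>L M (\<lambda>x. s * c powr (s-1) * (h x - c)) = s * c powr (s-1) * integral\<^sup>L M (\<lambda>x. h x - c)"
        by simp
      also have "integral\<^sup>L M (\<lambda>x. h x - c) = integral\<^sup>L M h - integral\<^sup>L M (\<lambda>x. c)"
        using ic ih by (intro Bochner_Integration.integral_diff) auto
      finally show ?thesis unfolding \<mu>_def by (simp add: mult.commute)
    qed
    moreover have "integral\<^sup>L M h - \<mu> * c = 0" unfolding c_def using mu \<mu>_def by simp
    ultimately have "\<mu> * c powr s \<le> integral\<^sup>L M (\<lambda>x. h x powr s)" by simp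
    then show ?thesis unfolding c_def[symmetric] \<mu>_def[symmetric] using mu \<mu>_def
      by (simp add: field_simps)
  qed
qed



lemma jensen_r:
  fixes e :: "'a \<Rightarrow> real"
  assumes fm: "finite_measure M" and mu: "measure M (space M) > 0"
    and r: "0 < r" "r \<le> p" and e0: "\<And>x. x \<in> space M \<Longrightarrow> 0 \<le> e x"
    and em: "e \<in> borel_measurable M"
    and ip: "integrable M (\<lambda>x. e x powr p)"
  shows "integrable M (\<lambda>x. e x powr r)"
    and "integral\<^sup>L M (\<lambda>x. e x powr r) / measure M (space M)
          \<le> (integral\<^sup>L M (\<lambda>x. e x powr p) / measure M (space M)) powr (r / p)"
proof -
  show ir: "integrable M (\<lambda>x. e x powr r)"
  proof (rule Bochner_Integration.integrable_bound)
    show "integrable M (\<lambda>x. 1 + e x powr p)"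
      using fm ip by (auto intro!: finite_measure.integrable_const)
    show "(\<lambda>x. e x powr r) \<in> borel_measurable M" using em by measurable
    show "AE x in M. norm (e x powr r) \<le> norm (1 + e x powr p)"
      using pow_le_one_plus[OF _ r] e0 by (auto intro!: AE_I2)
  qed
  define X where "X = integral\<^sup>L M (\<lambda>x. e x powr r) / measure M (space M)"
  have X0: "X \<ge> 0" unfolding X_def using mu by (simp add: integral_nonneg_AE)
  have p0: "p > 0" using r by simp
  have "X powr (p / r) \<le> integral\<^sup>L M (\<lambda>x. (e x powr r) powr (p / r)) / measure M (space M)"
    unfolding X_def
    by (rule jensen_powr[OF fm mu _ _ ir]) (use r e0 ip in \<open>auto simp: powr_powr\<close>)
  also have "integral\<^sup>L M (\<lambda>x. (e x powr r) powr (p / r)) = integral\<^sup>L M (\<lambda>x. e x powr p)"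
    using r by (simp add: powr_powr)
  finally have *: "X powr (p / r) \<le> integral\<^sup>L M (\<lambda>x. e x powr p) / measure M (space M)" .
  have "X = (X powr (p / r)) powr (r / p)" using X0 r by (simp add: powr_powr)
  also have "\<dots> \<le> (integral\<^sup>L M (\<lambda>x. e x powr p) / measure M (space M)) powr (r / p)"
    using * r by (intro powr_mono2) auto
  finally show "integral\<^sup>L M (\<lambda>x. e x powr r) / measure M (space M)
          \<le> (integral\<^sup>L M (\<lambda>x. e x powr p) / measure M (space M)) powr (r / p)"
    unfolding X_def .
qed

lemma final_le1:
  fixes \<alpha> x y na nb D K :: real
  assumes a: "0 < \<alpha>" "\<alpha> \<le> 1" and b: "\<beta> = 1 / \<alpha>"
    and x0: "0 \<le> x" and xy: "x \<le> y" and nay: "na \<le> y" and na0: "0 \<le> na"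
    and nb: "nb = na powr \<alpha>" and D0: "0 \<le> D" and K0: "0 \<le> K"
    and hx: "x \<le> K * (D powr \<beta> + nb powr (\<beta>-1) * D)"
  shows "y powr (\<alpha>-1) * x \<le> ((2*K) powr \<alpha> + 2*K) * D"
proof (cases "x = 0")
  case True then show ?thesis using D0 K0 by simp
next
  case False
  then have xp: "x > 0" using x0 by simp
  have b1: "\<beta> \<ge> 1" using a b by simp
  have ab: "\<alpha> * \<beta> = 1" using a b by simp
  have nb0: "nb \<ge> 0" using nb by simp
  show ?thesis
  proof (cases "nb \<le> D")
    case True
    have "nb powr (\<beta>-1) * D \<le> D powr (\<beta>-1) * D"
      using True b1 nb0 D0 by (intro mult_right_mono powr_mono2) auto
    also have "\<dots> = D powr \<beta>" using D0 by (simp add: powr_mult_base mult.commute)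
    finally have le: "nb powr (\<beta>-1) * D \<le> D powr \<beta>" .
    have "K * (D powr \<beta> + nb powr (\<beta>-1) * D) \<le> K * (D powr \<beta> + D powr \<beta>)"
      using le K0 by (intro mult_left_mono) auto
    then have "x \<le> 2 * K * D powr \<beta>" using hx by simp
    have "y powr (\<alpha>-1) * x \<le> x powr (\<alpha>-1) * x"
      using xp xy a by (intro mult_right_mono powr_mono2') auto
    also have "\<dots> = x powr \<alpha>" using xp by (simp add: powr_mult_base mult.commute)
    also have "\<dots> \<le> (2 * K * D powr \<beta>) powr \<alpha>"
      using \<open>x \<le> 2 * K * D powr \<beta>\<close> xp a by (intro powr_mono2) auto
    also have "\<dots> = (2 * K) powr \<alpha> * D" using K0 D0 ab
      by (simp add: powr_mult powr_powr mult.commute)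
    also have "\<dots> \<le> ((2*K) powr \<alpha> + 2*K) * D" using K0 D0 by (simp add: algebra_simps)
    finally show ?thesis .
  next
    case False
    then have nbp: "nb > 0" using D0 by simp
    then have nap: "na > 0" using nb na0 by (cases "na = 0") auto
    have "D powr \<beta> = D powr (\<beta>-1) * D" using D0 by (simp add: powr_mult_base mult.commute)
    also have "\<dots> \<le> nb powr (\<beta>-1) * D"
      using False b1 D0 by (intro mult_right_mono powr_mono2) auto
    finally have le: "D powr \<beta> \<le> nb powr (\<beta>-1) * D" .
    have "K * (D powr \<beta> + nb powr (\<beta>-1) * D) \<le> K * (nb powr (\<beta>-1) * D + nb powr (\<beta>-1) * D)"
      using le K0 by (intro mult_left_mono add_right_mono) auto
    then have "x \<le> 2 * K * nb powr (\<beta>-1) * D" using hx by (simp add: algebra_simps)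
    have e1: "na powr (\<alpha>-1) * nb powr (\<beta>-1) = 1"
    proof -
      have "nb powr (\<beta>-1) = na powr (\<alpha> * (\<beta>-1))" using nb nap by (simp add: powr_powr)
      then have "na powr (\<alpha>-1) * nb powr (\<beta>-1) = na powr ((\<alpha>-1) + \<alpha> * (\<beta>-1))"
        by (simp add: powr_add)
      also have "(\<alpha>-1) + \<alpha> * (\<beta>-1) = 0" using ab by (simp add: algebra_simps)
      finally show ?thesis using nap by simp
    qed
    have "y powr (\<alpha>-1) * x \<le> na powr (\<alpha>-1) * x"
      using nap nay a x0 by (intro mult_right_mono powr_mono2') auto
    also have "\<dots> \<le> na powr (\<alpha>-1) * (2 * K * nb powr (\<beta>-1) * D)"
      using \<open>x \<le> 2 * K * nb powr (\<beta>-1) * D\<close> by (intro mult_left_mono) auto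
    also have "\<dots> = 2 * K * D * (na powr (\<alpha>-1) * nb powr (\<beta>-1))" by (simp add: algebra_simps)
    also have "\<dots> = 2 * K * D" using e1 by simp
    also have "\<dots> \<le> ((2*K) powr \<alpha> + 2*K) * D" using K0 D0 by (simp add: algebra_simps)
    finally show ?thesis .
  qed
qed

lemma final_gt1:
  fixes \<alpha> x y na nb D K :: real
  assumes a: "1 < \<alpha>" and b: "\<beta> = 1 / \<alpha>"
    and x0: "0 \<le> x" and yx: "y \<le> x + 2 * na" and y0: "0 \<le> y" and na0: "0 \<le> na"
    and nb: "nb = na powr \<alpha>" and D0: "0 \<le> D" and K0: "0 \<le> K"
    and hx1: "x \<le> K * D powr \<beta>"
    and hx2: "nb > 0 \<Longrightarrow> x \<le> K * nb powr (\<beta>-1) * D"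
  shows "y powr (\<alpha>-1) * x \<le> (K+2) powr (\<alpha>-1) * K * D"
proof -
  have ab: "\<alpha> * \<beta> = 1" using a b by simp
  have b0: "\<beta> > 0" using a b by simp
  have nb0: "nb \<ge> 0" using nb by simp
  have nanb: "na = nb powr \<beta>" using nb na0 ab
    by (cases "na = 0") (auto simp: powr_powr)
  show ?thesis
  proof (cases "nb \<le> D")
    case True
    have "na \<le> D powr \<beta>" unfolding nanb using True nb0 b0 by (intro powr_mono2) auto
    then have "y \<le> (K+2) * D powr \<beta>" using yx hx1 by (simp add: algebra_simps)
    then have "y powr (\<alpha>-1) \<le> ((K+2) * D powr \<beta>) powr (\<alpha>-1)"
      using y0 a by (intro powr_mono2) auto
    also have "\<dots> = (K+2) powr (\<alpha>-1) * D powr (\<beta> * (\<alpha>-1))"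
      using K0 D0 by (simp add: powr_mult powr_powr)
    finally have "y powr (\<alpha>-1) * x \<le> (K+2) powr (\<alpha>-1) * D powr (\<beta> * (\<alpha>-1)) * (K * D powr \<beta>)"
      using hx1 x0 by (intro mult_mono) auto
    also have "\<dots> = (K+2) powr (\<alpha>-1) * K * D powr (\<beta> * (\<alpha>-1) + \<beta>)"
      by (simp add: powr_add)
    also have "\<beta> * (\<alpha>-1) + \<beta> = 1" using ab by (simp add: algebra_simps)
    finally show ?thesis using D0 by simp
  next
    case False
    then have nbp: "nb > 0" using D0 by simp
    then have nap: "na > 0" using nb na0 by (cases "na = 0") auto
    have "K * nb powr (\<beta>-1) * D \<le> K * nb powr (\<beta>-1) * nb"
      using False K0 by (intro mult_left_mono) auto
    also have "\<dots> = K * na" unfolding nanb using nbp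
      by (simp add: powr_mult_base mult.commute mult.left_commute)
    finally have xna: "x \<le> K * na" using hx2[OF nbp] by simp
    have "y \<le> (K+2) * na" using yx xna by (simp add: algebra_simps)
    then have "y powr (\<alpha>-1) \<le> ((K+2) * na) powr (\<alpha>-1)"
      using y0 a by (intro powr_mono2) auto
    also have "\<dots> = (K+2) powr (\<alpha>-1) * na powr (\<alpha>-1)"
      using K0 na0 by (simp add: powr_mult)
    finally have "y powr (\<alpha>-1) * x \<le> (K+2) powr (\<alpha>-1) * na powr (\<alpha>-1) * (K * nb powr (\<beta>-1) * D)"
      using hx2[OF nbp] x0 by (intro mult_mono) auto
    also have "\<dots> = (K+2) powr (\<alpha>-1) * K * D * (na powr (\<alpha>-1) * nb powr (\<beta>-1))"
      by (simp add: algebra_simps)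
    also have "na powr (\<alpha>-1) * nb powr (\<beta>-1) = 1"
    proof -
      have "nb powr (\<beta>-1) = na powr (\<alpha> * (\<beta>-1))" using nb nap by (simp add: powr_powr)
      then have "na powr (\<alpha>-1) * nb powr (\<beta>-1) = na powr ((\<alpha>-1) + \<alpha> * (\<beta>-1))"
        by (simp add: powr_add)
      also have "(\<alpha>-1) + \<alpha> * (\<beta>-1) = 0" using ab by (simp add: algebra_simps)
      finally show ?thesis using nap by simp
    qed
    finally show ?thesis by simp
  qed
qed



lemma vnorm_diff_le: "vnorm N (\<lambda>i. x i - y i) \<le> vnorm N x + vnorm N y"
proof -
  have "vnorm N (\<lambda>i. x i + (-1) * y i) \<le> vnorm N x + vnorm N (\<lambda>i. (-1) * y i)"
    by (rule vnorm_add)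
  then show ?thesis unfolding vnorm_scale by simp
qed

lemma vnorm_le_diff_plus: "vnorm N x \<le> vnorm N (\<lambda>i. x i - y i) + vnorm N y"
  using vnorm_add[of N "\<lambda>i. x i - y i" y] by simp

lemma comp_le_vnorm: "i < N \<Longrightarrow> \<bar>v i\<bar> \<le> vnorm N v"
proof -
  assume i: "i < N"
  have "(v i)\<^sup>2 \<le> (\<Sum>j<N. (v j)\<^sup>2)"
    using i by (intro member_le_sum) auto
  then have "sqrt ((v i)\<^sup>2) \<le> vnorm N v" unfolding vnorm_def by (rule real_sqrt_le_mono)
  then show ?thesis by simp
qed

lemma spow_measurable:
  assumes "\<And>i. i < N \<Longrightarrow> (\<lambda>x. u x i) \<in> borel_measurable M"
  shows "(\<lambda>x. vnorm N (\<lambda>i. spow N \<gamma> (u x) i - c i)) \<in> borel_measurable M"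
proof -
  have n: "(\<lambda>x. vnorm N (u x)) \<in> borel_measurable M" by (rule vnorm_measurable) (use assms in auto)
  show ?thesis unfolding spow_eq
    by (rule vnorm_measurable) (use n assms in measurable)
qed

lemma core:
  fixes p \<alpha> :: real and M :: "'a measure" and u :: "'a \<Rightarrow> nat \<Rightarrow> real" and a :: "nat \<Rightarrow> real"
  assumes p: "p \<ge> 1" and al: "\<alpha> \<ge> 1 / p"
    and fm: "finite_measure M" and mu: "measure M (space M) > 0"
    and um: "\<And>i. i < N \<Longrightarrow> (\<lambda>x. u x i) \<in> borel_measurable M"
    and ui: "integrable M (\<lambda>x. vnorm N (u x) powr (\<alpha> * p))"
  defines "\<beta> \<equiv> 1 / \<alpha>"
  defines "Cb \<equiv> (2 + \<beta>) * 2 powr \<bar>\<beta> - 1\<bar>"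
  defines "Ca \<equiv> (2 + \<alpha>) * 2 powr \<bar>\<alpha> - 1\<bar>"
  defines "K1 \<equiv> Cb * 2 powr (\<beta> - 1) * 2 powr (\<beta> - 1)"
  defines "C1 \<equiv> Ca * ((2 * K1) powr \<alpha> + 2 * K1 + (Cb + 2) powr (\<alpha> - 1) * Cb)"
  shows "vnorm N (\<lambda>i. spow N \<alpha> (\<lambda>i. if i < N then integral\<^sup>L M (\<lambda>x. u x i) / measure M (space M) else 0) i
            - spow N \<alpha> a i) powr p
     \<le> C1 powr p * (integral\<^sup>L M (\<lambda>x. vnorm N (\<lambda>i. spow N \<alpha> (u x) i - spow N \<alpha> a i) powr p) / measure M (space M))"
proof -
  define \<mu> where "\<mu> = measure M (space M)"
  define m where "m = (\<lambda>i. if i < N then integral\<^sup>L M (\<lambda>x. u x i) / \<mu> else 0)"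
  define b where "b = spow N \<alpha> a"
  define e where "e = (\<lambda>x. vnorm N (\<lambda>i. spow N \<alpha> (u x) i - b i))"
  define na where "na = vnorm N a"
  define nb where "nb = vnorm N b"
  define I where "I = integral\<^sup>L M (\<lambda>x. e x powr p) / \<mu>"
  define D where "D = I powr (1 / p)"
  define x where "x = vnorm N (\<lambda>i. m i - a i)"
  define y where "y = vnorm N m + na"
  have mu0: "\<mu> > 0" using mu unfolding \<mu>_def .
  have p0: "p > 0" using p by simp
  have a0: "\<alpha> > 0" using al p0 by (smt (verit) divide_pos_pos)
  have bdef: "\<beta> = 1 / \<alpha>" by (simp add: \<beta>_def)
  have ab: "\<alpha> * \<beta> = 1" unfolding \<beta>_def using a0 by simp
  have b0: "\<beta> > 0" unfolding \<beta>_def using a0 by simp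
  have bp: "\<beta> \<le> p" unfolding \<beta>_def using al a0 p0 by (simp add: field_simps)
  have ap1: "\<alpha> * p \<ge> 1" using al p0 by (simp add: field_simps)
  have nb_na: "nb = na powr \<alpha>" unfolding nb_def na_def b_def by (rule vnorm_spow)
  have e0: "\<And>x. 0 \<le> e x" unfolding e_def by simp
  have em: "e \<in> borel_measurable M" unfolding e_def by (rule spow_measurable) (use um in auto)
  have nm: "(\<lambda>x. vnorm N (u x)) \<in> borel_measurable M" by (rule vnorm_measurable) (use um in auto)
  have ic: "\<And>k::real. integrable M (\<lambda>x. k)" using fm by (simp add: finite_measure.integrable_const)
  have iep: "integrable M (\<lambda>x. e x powr p)"
  proof (rule Bochner_Integration.integrable_bound)
    show "integrable M (\<lambda>x. 2 powr p * (vnorm N (u x) powr (\<alpha> * p) + nb powr p))"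
      using ui ic by auto
    show "(\<lambda>x. e x powr p) \<in> borel_measurable M" using em by measurable
    show "AE x in M. norm (e x powr p) \<le> norm (2 powr p * (vnorm N (u x) powr (\<alpha> * p) + nb powr p))"
    proof (rule AE_I2)
      fix z
      have "e z \<le> vnorm N (spow N \<alpha> (u z)) + nb" unfolding e_def nb_def by (rule vnorm_diff_le)
      also have "vnorm N (spow N \<alpha> (u z)) = vnorm N (u z) powr \<alpha>" by (rule vnorm_spow)
      finally have "e z powr p \<le> (vnorm N (u z) powr \<alpha> + nb) powr p"
        using e0 p0 by (intro powr_mono2) auto
      also have "\<dots> \<le> 2 powr p * ((vnorm N (u z) powr \<alpha>) powr p + nb powr p)"
        using p0 by (intro sum_powr_le) (auto simp: nb_def)
      also have "(vnorm N (u z) powr \<alpha>) powr p = vnorm N (u z) powr (\<alpha> * p)" by (simp add: powr_powr)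
      finally show "norm (e z powr p) \<le> norm (2 powr p * (vnorm N (u z) powr (\<alpha> * p) + nb powr p))"
        by (simp add: nb_def)
    qed
  qed
  have I0: "I \<ge> 0" unfolding I_def using mu0 by (simp add: integral_nonneg_AE)
  have D0: "D \<ge> 0" unfolding D_def by simp
  have ieb: "integrable M (\<lambda>x. e x powr \<beta>)"
    using jensen_r(1)[OF fm mu b0 bp _ em iep] e0 by auto
  have Jb: "integral\<^sup>L M (\<lambda>x. e x powr \<beta>) / \<mu> \<le> D powr \<beta>"
  proof -
    have "integral\<^sup>L M (\<lambda>x. e x powr \<beta>) / \<mu> \<le> I powr (\<beta> / p)"
      using jensen_r(2)[OF fm mu b0 bp _ em iep] e0 unfolding I_def \<mu>_def by auto
    also have "I powr (\<beta> / p) = D powr \<beta>" unfolding D_def by (simp add: powr_powr)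
    finally show ?thesis .
  qed
  have ie1: "integrable M e"
    using jensen_r(1)[OF fm mu _ p _ em iep] e0 by auto
  have J1: "integral\<^sup>L M e / \<mu> \<le> D"
  proof -
    have "integral\<^sup>L M (\<lambda>x. e x powr 1) / \<mu> \<le> I powr (1 / p)"
      using jensen_r(2)[OF fm mu _ p _ em iep] e0 unfolding I_def \<mu>_def by auto
    moreover have "(\<lambda>x. e x powr 1) = e" using e0 by auto
    ultimately show ?thesis unfolding D_def by simp
  qed
  have uiL: "integrable M (\<lambda>z. u z i)" if i: "i < N" for i
  proof (rule Bochner_Integration.integrable_bound)
    show "integrable M (\<lambda>z. 1 + vnorm N (u z) powr (\<alpha> * p))" using ui ic by auto
    show "(\<lambda>z. u z i) \<in> borel_measurable M" using um i by auto
    show "AE z in M. norm (u z i) \<le> norm (1 + vnorm N (u z) powr (\<alpha> * p))"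
    proof (rule AE_I2)
      fix z
      have "\<bar>u z i\<bar> \<le> vnorm N (u z)" using i by (rule comp_le_vnorm)
      also have "\<dots> \<le> 1 + vnorm N (u z) powr (\<alpha> * p)"
        using pow_le_one_plus[of "vnorm N (u z)" 1 "\<alpha> * p"] ap1 by simp
      finally show "norm (u z i) \<le> norm (1 + vnorm N (u z) powr (\<alpha> * p))"
        by (smt (verit) powr_ge_zero real_norm_def)
    qed
  qed
  define ua where "ua = (\<lambda>z. vnorm N (\<lambda>i. u z i - a i))"
  have iua: "integrable M ua"
  proof (rule Bochner_Integration.integrable_bound)
    show "integrable M (\<lambda>z. 1 + vnorm N (u z) powr (\<alpha> * p) + na)" using ui ic by auto
    show "ua \<in> borel_measurable M" unfolding ua_def by (rule vnorm_measurable) (use um in auto)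
    show "AE z in M. norm (ua z) \<le> norm (1 + vnorm N (u z) powr (\<alpha> * p) + na)"
    proof (rule AE_I2)
      fix z
      have "ua z \<le> vnorm N (u z) + na" unfolding ua_def na_def by (rule vnorm_diff_le)
      also have "vnorm N (u z) \<le> 1 + vnorm N (u z) powr (\<alpha> * p)"
        using pow_le_one_plus[of "vnorm N (u z)" 1 "\<alpha> * p"] ap1 by simp
      finally show "norm (ua z) \<le> norm (1 + vnorm N (u z) powr (\<alpha> * p) + na)"
        unfolding ua_def na_def by (smt (verit) powr_ge_zero real_norm_def vnorm_nonneg)
    qed
  qed
  have xmean: "x \<le> integral\<^sup>L M ua / \<mu>"
  proof -
    have "x = vnorm N (\<lambda>i. (1 / \<mu>) * integral\<^sup>L M (\<lambda>z. u z i - a i))"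
      unfolding x_def
    proof (rule vnorm_cong)
      fix i assume i: "i < N"
      have "integral\<^sup>L M (\<lambda>z. u z i - a i) = integral\<^sup>L M (\<lambda>z. u z i) - \<mu> * a i"
        using uiL[OF i] ic unfolding \<mu>_def by (subst Bochner_Integration.integral_diff) auto
      then show "m i - a i = (1 / \<mu>) * integral\<^sup>L M (\<lambda>z. u z i - a i)"
        unfolding m_def using i mu0 by (simp add: field_simps)
    qed
    also have "\<dots> = (1 / \<mu>) * vnorm N (\<lambda>i. integral\<^sup>L M (\<lambda>z. u z i - a i))"
      unfolding vnorm_scale using mu0 by simp
    also have "vnorm N (\<lambda>i. integral\<^sup>L M (\<lambda>z. u z i - a i)) \<le> integral\<^sup>L M ua"
      unfolding ua_def by (rule mean_bound) (use uiL ic iua in \<open>auto simp: ua_def\<close>)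
    finally show ?thesis using mu0 by (simp add: divide_right_mono)
  qed
  have pw: "ua z \<le> Cb * (vnorm N (spow N \<alpha> (u z)) + nb) powr (\<beta> - 1) * e z" for z
  proof -
    have "ua z = vnorm N (\<lambda>i. spow N \<beta> (spow N \<alpha> (u z)) i - spow N \<beta> b i)"
      unfolding ua_def b_def by (rule vnorm_cong) (simp add: spow_spow[OF ab a0])
    also have "\<dots> \<le> Cb * (vnorm N (spow N \<alpha> (u z)) + vnorm N b) powr (\<beta> - 1)
        * vnorm N (\<lambda>i. spow N \<alpha> (u z) i - b i)"
      unfolding Cb_def by (rule U_ineq[OF b0])
    finally show ?thesis unfolding e_def nb_def .
  qed
  have Vle: "vnorm N (spow N \<alpha> (u z)) \<le> e z + nb" for z
    unfolding e_def nb_def by (rule vnorm_le_diff_plus)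
  have eVle: "e z \<le> vnorm N (spow N \<alpha> (u z)) + nb" for z
    unfolding e_def nb_def by (rule vnorm_diff_le)
  have nb0: "nb \<ge> 0" unfolding nb_def by simp
  have na0: "na \<ge> 0" unfolding na_def by simp
  have Cb0: "Cb \<ge> 0" unfolding Cb_def using b0 by simp
  have Ca0: "Ca \<ge> 0" unfolding Ca_def using a0 by simp
  have K10: "K1 \<ge> 0" unfolding K1_def using Cb0 by simp
  have x0: "x \<ge> 0" unfolding x_def by simp
  have xy: "x \<le> y" unfolding x_def y_def na_def by (rule vnorm_diff_le)
  have nay: "na \<le> y" unfolding y_def by simp
  have yx: "y \<le> x + 2 * na" unfolding y_def x_def na_def using vnorm_le_diff_plus[of N m a] by simp
  have y0: "y \<ge> 0" using nay na0 by simp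
  have Ua: "vnorm N (\<lambda>i. spow N \<alpha> m i - spow N \<alpha> a i) \<le> Ca * y powr (\<alpha> - 1) * x"
    unfolding Ca_def y_def x_def na_def by (rule U_ineq[OF a0])
  have main: "y powr (\<alpha> - 1) * x \<le> ((2 * K1) powr \<alpha> + 2 * K1 + (Cb + 2) powr (\<alpha> - 1) * Cb) * D"
  proof (cases "\<alpha> \<le> 1")
    case True
    have b1: "\<beta> \<ge> 1" unfolding \<beta>_def using True a0 by simp
    have pw2: "ua z \<le> K1 * (e z powr \<beta> + nb powr (\<beta> - 1) * e z)" for z
    proof -
      have "(vnorm N (spow N \<alpha> (u z)) + nb) powr (\<beta> - 1) \<le> (2 * (e z + nb)) powr (\<beta> - 1)"
        using Vle[of z] b1 nb0 e0[of z] by (intro powr_mono2) auto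
      also have "\<dots> = 2 powr (\<beta> - 1) * (e z + nb) powr (\<beta> - 1)"
        using nb0 e0[of z] by (subst powr_mult) auto
      also have "(e z + nb) powr (\<beta> - 1) \<le> 2 powr (\<beta> - 1) * (e z powr (\<beta> - 1) + nb powr (\<beta> - 1))"
        using nb0 e0[of z] b1 by (intro sum_powr_le) auto
      finally have "(vnorm N (spow N \<alpha> (u z)) + nb) powr (\<beta> - 1)
          \<le> 2 powr (\<beta> - 1) * 2 powr (\<beta> - 1) * (e z powr (\<beta> - 1) + nb powr (\<beta> - 1))"
        by (simp add: mult_left_mono mult.assoc)
      then have "ua z \<le> Cb * (2 powr (\<beta> - 1) * 2 powr (\<beta> - 1) * (e z powr (\<beta> - 1) + nb powr (\<beta> - 1))) * e z"
        using pw[of z] Cb0 e0[of z] by (smt (verit, best) mult_left_mono mult_right_mono)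
      also have "\<dots> = K1 * (e z powr (\<beta> - 1) * e z + nb powr (\<beta> - 1) * e z)"
        unfolding K1_def by (simp add: algebra_simps)
      also have "e z powr (\<beta> - 1) * e z = e z powr \<beta>"
        using e0[of z] by (simp add: powr_mult_base mult.commute)
      finally show ?thesis .
    qed
    have "integral\<^sup>L M ua \<le> integral\<^sup>L M (\<lambda>z. K1 * (e z powr \<beta> + nb powr (\<beta> - 1) * e z))"
      using pw2 ieb ie1 iua by (intro integral_mono) auto
    also have "\<dots> = K1 * (integral\<^sup>L M (\<lambda>z. e z powr \<beta>) + nb powr (\<beta> - 1) * integral\<^sup>L M e)"
      using ieb ie1 by simp
    finally have "x \<le> K1 * (integral\<^sup>L M (\<lambda>z. e z powr \<beta>) + nb powr (\<beta> - 1) * integral\<^sup>L M e) / \<mu>"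
      using xmean mu0 by (smt (verit) divide_right_mono)
    also have "\<dots> = K1 * (integral\<^sup>L M (\<lambda>z. e z powr \<beta>) / \<mu> + nb powr (\<beta> - 1) * (integral\<^sup>L M e / \<mu>))"
      by (simp add: algebra_simps add_divide_distrib)
    also have "\<dots> \<le> K1 * (D powr \<beta> + nb powr (\<beta> - 1) * D)"
      using Jb J1 K10 by (intro mult_left_mono add_mono mult_left_mono) auto
    finally have hx: "x \<le> K1 * (D powr \<beta> + nb powr (\<beta> - 1) * D)" .
    have "y powr (\<alpha> - 1) * x \<le> ((2 * K1) powr \<alpha> + 2 * K1) * D"
      by (rule final_le1[OF a0 True bdef x0 xy nay na0 nb_na D0 K10 hx])
    also have "\<dots> \<le> ((2 * K1) powr \<alpha> + 2 * K1 + (Cb + 2) powr (\<alpha> - 1) * Cb) * D"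
      using D0 Cb0 by (intro mult_right_mono) auto
    finally show ?thesis .
  next
    case False
    have b1: "\<beta> < 1" unfolding \<beta>_def using False a0 by simp
    have pw3: "ua z \<le> Cb * e z powr \<beta>" for z
    proof -
      have "(vnorm N (spow N \<alpha> (u z)) + nb) powr (\<beta> - 1) * e z \<le> e z powr (\<beta> - 1) * e z"
      proof (cases "e z = 0")
        case False
        then have "e z > 0" using e0[of z] by simp
        then show ?thesis using eVle[of z] b1 by (intro mult_right_mono powr_mono2') auto
      qed simp
      also have "\<dots> = e z powr \<beta>" using e0[of z] by (simp add: powr_mult_base mult.commute)
      finally show ?thesis using pw[of z] Cb0 by (smt (verit, best) mult_left_mono mult.assoc)
    qed
    have pw4: "ua z \<le> Cb * nb powr (\<beta> - 1) * e z" if nbp: "nb > 0" for z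
    proof -
      have "(vnorm N (spow N \<alpha> (u z)) + nb) powr (\<beta> - 1) \<le> nb powr (\<beta> - 1)"
        using nbp b1 by (intro powr_mono2') auto
      then show ?thesis using pw[of z] Cb0 e0[of z] by (smt (verit, best) mult_left_mono mult_right_mono)
    qed
    have hx1: "x \<le> Cb * D powr \<beta>"
    proof -
      have "integral\<^sup>L M ua \<le> integral\<^sup>L M (\<lambda>z. Cb * e z powr \<beta>)"
        using pw3 ieb iua by (intro integral_mono) auto
      also have "\<dots> = Cb * integral\<^sup>L M (\<lambda>z. e z powr \<beta>)" by simp
      finally have "x \<le> Cb * integral\<^sup>L M (\<lambda>z. e z powr \<beta>) / \<mu>"
        using xmean mu0 by (smt (verit) divide_right_mono)
      also have "\<dots> = Cb * (integral\<^sup>L M (\<lambda>z. e z powr \<beta>) / \<mu>)" by simp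
      also have "\<dots> \<le> Cb * D powr \<beta>" using Jb Cb0 by (intro mult_left_mono) auto
      finally show ?thesis .
    qed
    have hx2: "x \<le> Cb * nb powr (\<beta> - 1) * D" if nbp: "nb > 0"
    proof -
      have "integral\<^sup>L M ua \<le> integral\<^sup>L M (\<lambda>z. Cb * nb powr (\<beta> - 1) * e z)"
        using pw4[OF nbp] ie1 iua by (intro integral_mono) auto
      also have "\<dots> = Cb * nb powr (\<beta> - 1) * integral\<^sup>L M e" by simp
      finally have "x \<le> Cb * nb powr (\<beta> - 1) * integral\<^sup>L M e / \<mu>"
        using xmean mu0 by (smt (verit) divide_right_mono)
      also have "\<dots> = Cb * nb powr (\<beta> - 1) * (integral\<^sup>L M e / \<mu>)" by simp
      also have "\<dots> \<le> Cb * nb powr (\<beta> - 1) * D" using J1 Cb0 by (intro mult_left_mono) auto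
      finally show ?thesis .
    qed
    have a1: "1 < \<alpha>" using False by simp
    have "y powr (\<alpha> - 1) * x \<le> (Cb + 2) powr (\<alpha> - 1) * Cb * D"
      by (rule final_gt1[OF a1 bdef x0 yx y0 na0 nb_na D0 Cb0 hx1 hx2])
    also have "\<dots> \<le> ((2 * K1) powr \<alpha> + 2 * K1 + (Cb + 2) powr (\<alpha> - 1) * Cb) * D"
      using D0 K10 by (intro mult_right_mono) auto
    finally show ?thesis .
  qed
  have C1_ge: "vnorm N (\<lambda>i. spow N \<alpha> m i - spow N \<alpha> a i) \<le> C1 * D"
  proof -
    have "vnorm N (\<lambda>i. spow N \<alpha> m i - spow N \<alpha> a i) \<le> Ca * (y powr (\<alpha> - 1) * x)"
      using Ua by (simp add: mult.assoc)
    also have "\<dots> \<le> Ca * (((2 * K1) powr \<alpha> + 2 * K1 + (Cb + 2) powr (\<alpha> - 1) * Cb) * D)"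
      using main Ca0 by (intro mult_left_mono) auto
    finally show ?thesis unfolding C1_def by (simp add: mult.assoc)
  qed
  have C10: "C1 \<ge> 0" unfolding C1_def using Ca0 K10 Cb0 by simp
  have "vnorm N (\<lambda>i. spow N \<alpha> m i - spow N \<alpha> a i) powr p \<le> (C1 * D) powr p"
    using C1_ge p0 by (intro powr_mono2) auto
  also have "\<dots> = C1 powr p * I" unfolding D_def using C10 I0 p0 by (simp add: powr_mult powr_powr)
  finally show ?thesis unfolding m_def \<mu>_def I_def e_def b_def .
qed



lemma iep_gen:
  fixes M :: "'a measure" and u :: "'a \<Rightarrow> nat \<Rightarrow> real"
  assumes fm: "finite_measure M" and p0: "p > 0"
    and um: "\<And>i. i < N \<Longrightarrow> (\<lambda>x. u x i) \<in> borel_measurable M"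
    and ui: "integrable M (\<lambda>x. vnorm N (u x) powr (\<alpha> * p))"
  shows "integrable M (\<lambda>x. vnorm N (\<lambda>i. spow N \<alpha> (u x) i - c i) powr p)"
proof -
  define e where "e = (\<lambda>x. vnorm N (\<lambda>i. spow N \<alpha> (u x) i - c i))"
  define nb where "nb = vnorm N c"
  have e0: "\<And>x. 0 \<le> e x" unfolding e_def by simp
  have em: "e \<in> borel_measurable M" unfolding e_def by (rule spow_measurable) (use um in auto)
  have ic: "\<And>k::real. integrable M (\<lambda>x. k)" using fm by (simp add: finite_measure.integrable_const)
  have "integrable M (\<lambda>x. e x powr p)"
  proof (rule Bochner_Integration.integrable_bound)
    show "integrable M (\<lambda>x. 2 powr p * (vnorm N (u x) powr (\<alpha> * p) + nb powr p))"
      using ui ic by auto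
    show "(\<lambda>x. e x powr p) \<in> borel_measurable M" using em by measurable
    show "AE x in M. norm (e x powr p) \<le> norm (2 powr p * (vnorm N (u x) powr (\<alpha> * p) + nb powr p))"
    proof (rule AE_I2)
      fix z
      have "e z \<le> vnorm N (spow N \<alpha> (u z)) + nb" unfolding e_def nb_def by (rule vnorm_diff_le)
      also have "vnorm N (spow N \<alpha> (u z)) = vnorm N (u z) powr \<alpha>" by (rule vnorm_spow)
      finally have "e z powr p \<le> (vnorm N (u z) powr \<alpha> + nb) powr p"
        using e0 p0 by (intro powr_mono2) auto
      also have "\<dots> \<le> 2 powr p * ((vnorm N (u z) powr \<alpha>) powr p + nb powr p)"
        using p0 by (intro sum_powr_le) (auto simp: nb_def)
      also have "(vnorm N (u z) powr \<alpha>) powr p = vnorm N (u z) powr (\<alpha> * p)" by (simp add: powr_powr)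
      finally show "norm (e z powr p) \<le> norm (2 powr p * (vnorm N (u z) powr (\<alpha> * p) + nb powr p))"
        by (simp add: nb_def)
    qed
  qed
  then show ?thesis unfolding e_def .
qed

lemma core_ex:
  fixes p \<alpha> :: real
  assumes p: "p \<ge> 1" and al: "\<alpha> \<ge> 1 / p"
  shows "\<exists>C0\<ge>0. \<forall>(M :: 'a measure) N u a. finite_measure M \<and> measure M (space M) > 0
     \<and> (\<forall>i<N. (\<lambda>x. u x i) \<in> borel_measurable M) \<and> integrable M (\<lambda>x. vnorm N (u x) powr (\<alpha> * p))
     \<longrightarrow> vnorm N (\<lambda>i. spow N \<alpha> (\<lambda>i. if i < N then integral\<^sup>L M (\<lambda>x. u x i) / measure M (space M) else 0) i
            - spow N \<alpha> a i) powr p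
     \<le> C0 * (integral\<^sup>L M (\<lambda>x. vnorm N (\<lambda>i. spow N \<alpha> (u x) i - spow N \<alpha> a i) powr p) / measure M (space M))"
  apply (rule exI[where x="((2 + \<alpha>) * 2 powr \<bar>\<alpha> - 1\<bar> * ((2 * ((2 + 1/\<alpha>) * 2 powr \<bar>1/\<alpha> - 1\<bar> * 2 powr (1/\<alpha> - 1) * 2 powr (1/\<alpha> - 1))) powr \<alpha>
     + 2 * ((2 + 1/\<alpha>) * 2 powr \<bar>1/\<alpha> - 1\<bar> * 2 powr (1/\<alpha> - 1) * 2 powr (1/\<alpha> - 1))
     + ((2 + 1/\<alpha>) * 2 powr \<bar>1/\<alpha> - 1\<bar> + 2) powr (\<alpha> - 1) * ((2 + 1/\<alpha>) * 2 powr \<bar>1/\<alpha> - 1\<bar>))) powr p"])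
  using core[OF p al] by auto



lemma set_int_restrict:
  assumes "S \<in> sets M"
  shows "set_lebesgue_integral M S f = integral\<^sup>L (restrict_space M S) (f :: _ \<Rightarrow> real)"
  using assms by (simp add: set_lebesgue_integral_def integral_restrict_space)

lemma set_integrable_restrict:
  assumes "S \<in> sets M"
  shows "set_integrable M S f \<longleftrightarrow> integrable (restrict_space M S) (f :: _ \<Rightarrow> real)"
  using assms by (simp add: set_integrable_def integrable_restrict_space)

theorem lemma3p5:
  fixes p \<alpha> :: real
  assumes "p \<ge> 1" and "\<alpha> \<ge> 1 / p"
  shows "\<exists>c::real. \<forall>(k::nat) (N::nat) A B u (a :: nat \<Rightarrow> real).
     bdd_domain k A \<and> bdd_domain k B \<and> A \<subseteq> B
     \<and> measure (lebk k) A > 0 \<and> measure (lebk k) B > 0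
     \<and> Lq_vec k N (\<alpha> * p) B u
     \<longrightarrow> (1 / measure (lebk k) B) *
           set_lebesgue_integral (lebk k) B
             (\<lambda>x. vnorm N (\<lambda>i. spow N \<alpha> (u x) i - spow N \<alpha> (vmean k N A u) i) powr p)
         \<le> (c * measure (lebk k) B / measure (lebk k) A) * ((1 / measure (lebk k) B) *
           set_lebesgue_integral (lebk k) B
             (\<lambda>x. vnorm N (\<lambda>i. spow N \<alpha> (u x) i - spow N \<alpha> a i) powr p))"
proof -
  obtain C0 where C0: "C0 \<ge> 0" and HC: "\<forall>(M :: (nat \<Rightarrow> real) measure) N u a. finite_measure M \<and> measure M (space M) > 0
     \<and> (\<forall>i<N. (\<lambda>x. u x i) \<in> borel_measurable M) \<and> integrable M (\<lambda>x. vnorm N (u x) powr (\<alpha> * p))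
     \<longrightarrow> vnorm N (\<lambda>i. spow N \<alpha> (\<lambda>i. if i < N then integral\<^sup>L M (\<lambda>x. u x i) / measure M (space M) else 0) i
            - spow N \<alpha> a i) powr p
     \<le> C0 * (integral\<^sup>L M (\<lambda>x. vnorm N (\<lambda>i. spow N \<alpha> (u x) i - spow N \<alpha> a i) powr p) / measure M (space M))"
    using core_ex[OF assms] by blast
  have p0: "p > 0" using assms by simp
  show ?thesis
  proof (rule exI[where x="2 powr p * (1 + C0)"], intro allI impI)
    fix k N A B u a
    assume H: "bdd_domain k A \<and> bdd_domain k B \<and> A \<subseteq> B
     \<and> measure (lebk k) A > 0 \<and> measure (lebk k) B > 0 \<and> Lq_vec k N (\<alpha> * p) B u"
    define M where "M = lebk k"
    have AB: "A \<subseteq> B" using H by simp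
    have mA: "measure M A > 0" and mB: "measure M B > 0" using H unfolding M_def by auto
    have Lq: "Lq_vec k N (\<alpha> * p) B u" using H by simp
    have AS: "A \<in> sets M" using mA measure_notin_sets by force
    have BS: "B \<in> sets M" using mB measure_notin_sets by force
    have Afin: "emeasure M A \<noteq> \<infinity>"
    proof
      assume "emeasure M A = \<infinity>"
      then have "measure M A = 0" by (simp add: measure_def)
      then show False using mA by simp
    qed
    have Bfin: "emeasure M B \<noteq> \<infinity>"
    proof
      assume "emeasure M B = \<infinity>"
      then have "measure M B = 0" by (simp add: measure_def)
      then show False using mB by simp
    qed
    define MA where "MA = restrict_space M A"
    define MB where "MB = restrict_space M B"
    have AS': "A \<inter> space M \<in> sets M" using AS sets.sets_into_space by (simp add: Int_absorb2)
    have BS': "B \<inter> space M \<in> sets M" using BS sets.sets_into_space by (simp add: Int_absorb2)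
    have spA: "space MA = A" unfolding MA_def using AS by simp
    have spB: "space MB = B" unfolding MB_def using BS by simp
    have fmA: "finite_measure MA"
    proof (rule finite_measureI)
      have "emeasure MA (space MA) = emeasure M A"
        unfolding spA unfolding MA_def by (rule emeasure_restrict_space[OF AS']) simp
      then show "emeasure MA (space MA) \<noteq> \<infinity>" using Afin by simp
    qed
    have fmB: "finite_measure MB"
    proof (rule finite_measureI)
      have "emeasure MB (space MB) = emeasure M B"
        unfolding spB unfolding MB_def by (rule emeasure_restrict_space[OF BS']) simp
      then show "emeasure MB (space MB) \<noteq> \<infinity>" using Bfin by simp
    qed
    have muA: "measure MA (space MA) = measure M A"
      unfolding spA unfolding MA_def by (rule measure_restrict_space[OF AS']) simp
    have muB: "measure MB (space MB) = measure M B"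
      unfolding spB unfolding MB_def by (rule measure_restrict_space[OF BS']) simp
    have umB: "\<forall>i<N. (\<lambda>x. u x i) \<in> borel_measurable MB"
      using Lq unfolding Lq_vec_def MB_def M_def by simp
    have MBA: "restrict_space MB A = MA"
      unfolding MB_def MA_def using restrict_restrict_space[OF BS' AS'] AB by (simp add: Int_absorb1)
    have umA: "\<forall>i<N. (\<lambda>x. u x i) \<in> borel_measurable MA"
      using umB measurable_restrict_space1[where M=MB and \<Omega>=A] unfolding MBA by blast
    have siB: "set_integrable M B (\<lambda>x. vnorm N (u x) powr (\<alpha> * p))"
      using Lq unfolding Lq_vec_def M_def by simp
    have uiB: "integrable MB (\<lambda>x. vnorm N (u x) powr (\<alpha> * p))"
      using siB set_integrable_restrict[OF BS] unfolding MB_def by simp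
    have uiA: "integrable MA (\<lambda>x. vnorm N (u x) powr (\<alpha> * p))"
      using set_integrable_subset[OF siB AS AB] set_integrable_restrict[OF AS] unfolding MA_def by simp
    define eA where "eA = (\<lambda>x. vnorm N (\<lambda>i. spow N \<alpha> (u x) i - spow N \<alpha> a i) powr p)"
    define m where "m = vmean k N A u"
    have m_eq: "m = (\<lambda>i. if i < N then integral\<^sup>L MA (\<lambda>x. u x i) / measure MA (space MA) else 0)"
      unfolding muA unfolding m_def vmean_def M_def[symmetric] MA_def by (simp only: set_int_restrict[OF AS])
    define \<delta> where "\<delta> = vnorm N (\<lambda>i. spow N \<alpha> m i - spow N \<alpha> a i)"
    have muA0: "measure MA (space MA) > 0" using muA mA by simp
    have core_app: "\<delta> powr p \<le> C0 * (integral\<^sup>L MA eA / measure M A)"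
      using HC[rule_format, of MA N u a] fmA muA0 umA uiA unfolding \<delta>_def m_eq eA_def muA by blast
    have eA0: "\<And>x. eA x \<ge> 0" unfolding eA_def by simp
    have ieB: "integrable MB eA" unfolding eA_def
      by (rule iep_gen[OF fmB p0]) (use umB uiB in auto)
    have sieB: "set_integrable M B eA" using ieB set_integrable_restrict[OF BS] unfolding MB_def by simp
    have sieA: "set_integrable M A eA" using set_integrable_subset[OF sieB AS AB] .
    have AleB: "integral\<^sup>L MA eA \<le> integral\<^sup>L MB eA"
    proof -
      have "integral\<^sup>L MA eA = set_lebesgue_integral M A eA" unfolding MA_def using set_int_restrict[OF AS] by simp
      also have "\<dots> \<le> set_lebesgue_integral M B eA"
        unfolding set_lebesgue_integral_def
        using sieA sieB unfolding set_integrable_def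
        using AB by (intro integral_mono) (auto simp: indicator_def eA0)
      also have "\<dots> = integral\<^sup>L MB eA" unfolding MB_def using set_int_restrict[OF BS] by simp
      finally show ?thesis .
    qed
    define S where "S = integral\<^sup>L MB eA"
    have S0: "S \<ge> 0" unfolding S_def using eA0 by (simp add: integral_nonneg_AE)
    have dA: "\<delta> powr p \<le> C0 * S / measure M A"
    proof -
      have "C0 * (integral\<^sup>L MA eA / measure M A) \<le> C0 * (S / measure M A)"
        using C0 mA AleB unfolding S_def by (intro mult_left_mono divide_right_mono) auto
      then show ?thesis using core_app by simp
    qed
    define E where "E = (\<lambda>x. vnorm N (\<lambda>i. spow N \<alpha> (u x) i - spow N \<alpha> m i) powr p)"
    have EB: "integral\<^sup>L MB E \<le> integral\<^sup>L MB (\<lambda>x. 2 powr p * (eA x + \<delta> powr p))"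
    proof (rule integral_mono')
      show "integrable MB (\<lambda>x. 2 powr p * (eA x + \<delta> powr p))"
        using ieB fmB by (auto intro!: finite_measure.integrable_const)
      fix x
      show "0 \<le> 2 powr p * (eA x + \<delta> powr p)" using eA0 by simp
      have "vnorm N (\<lambda>i. spow N \<alpha> (u x) i - spow N \<alpha> m i)
          \<le> vnorm N (\<lambda>i. spow N \<alpha> (u x) i - spow N \<alpha> a i) + vnorm N (\<lambda>i. spow N \<alpha> a i - spow N \<alpha> m i)"
        by (rule vnorm_tri)
      also have "vnorm N (\<lambda>i. spow N \<alpha> a i - spow N \<alpha> m i) = \<delta>" unfolding \<delta>_def by (rule vnorm_commute)
      finally have "E x \<le> (vnorm N (\<lambda>i. spow N \<alpha> (u x) i - spow N \<alpha> a i) + \<delta>) powr p"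
        unfolding E_def using p0 by (intro powr_mono2) auto
      also have "\<dots> \<le> 2 powr p * (vnorm N (\<lambda>i. spow N \<alpha> (u x) i - spow N \<alpha> a i) powr p + \<delta> powr p)"
        using p0 by (intro sum_powr_le) (auto simp: \<delta>_def)
      finally show "E x \<le> 2 powr p * (eA x + \<delta> powr p)" unfolding eA_def .
    qed
    also have "\<dots> = 2 powr p * (S + \<delta> powr p * measure M B)"
      using ieB fmB muB unfolding S_def by (simp add: finite_measure.integrable_const mult.commute)
    finally have EB2: "integral\<^sup>L MB E \<le> 2 powr p * (S + \<delta> powr p * measure M B)" .
    have mAB: "measure M A \<le> measure M B"
      using AB AS BS Bfin by (intro measure_mono_fmeasurable) (auto simp: fmeasurable_def less_top)
    have "(1 / measure M B) * integral\<^sup>L MB E \<le> (1 / measure M B) * (2 powr p * (S + \<delta> powr p * measure M B))"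
      using EB2 mB by (intro mult_left_mono) auto
    also have "\<dots> = 2 powr p * (S / measure M B) + 2 powr p * \<delta> powr p"
      using mB by (simp add: field_simps)
    also have "\<dots> \<le> 2 powr p * (S / measure M A) + 2 powr p * (C0 * S / measure M A)"
    proof (intro add_mono mult_left_mono)
      show "S / measure M B \<le> S / measure M A" using S0 mA mAB by (intro divide_left_mono) auto
    qed (use dA in auto)
    also have "\<dots> = (2 powr p * (1 + C0) * measure M B / measure M A) * ((1 / measure M B) * S)"
      using mA mB by (simp add: field_simps)
    finally have fin: "(1 / measure M B) * integral\<^sup>L MB E
        \<le> (2 powr p * (1 + C0) * measure M B / measure M A) * ((1 / measure M B) * S)" .
    have L: "set_lebesgue_integral M B E = integral\<^sup>L MB E" unfolding MB_def using set_int_restrict[OF BS] by simp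
    have R: "set_lebesgue_integral M B eA = S" unfolding S_def MB_def using set_int_restrict[OF BS] by simp
    show "(1 / measure (lebk k) B) *
           set_lebesgue_integral (lebk k) B
             (\<lambda>x. vnorm N (\<lambda>i. spow N \<alpha> (u x) i - spow N \<alpha> (vmean k N A u) i) powr p)
         \<le> (2 powr p * (1 + C0) * measure (lebk k) B / measure (lebk k) A) * ((1 / measure (lebk k) B) *
           set_lebesgue_integral (lebk k) B
             (\<lambda>x. vnorm N (\<lambda>i. spow N \<alpha> (u x) i - spow N \<alpha> a i) powr p))"
      using fin unfolding L[symmetric] R[symmetric] unfolding E_def eA_def m_def M_def .
  qed
qed

end
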